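(* Let $G$ be a $k$-colorable chordal graph, let $T$ be a clique of $G$ with $k-1\le|T|$, and let $v\in T$. If $\mathcal{C}^c_k(G,T)$ is a $(k-1,k)$-color-complete graph, then $\mathcal{C}^c_k(G,T\setminus\{v\})$ is a $(k-2,k)$-color-complete graph. If $\mathcal{C}^c_k(G,T)$ is a forest that satisfies the injective neighborhood property, then $\mathcal{C}^c_k(G,T\setminus\{v\})$ is a forest that satisfies the injective neighborhood property.
   Context: A chordal graph has no induced cycle of length $>3$. A $k$-coloring of $G$ is a map $\alpha:V(G)\to\{1,\dots,k\}$ with $\alpha(u)\ne\alpha(w)$ for all edges $uw$. $\mathcal{C}_k(G)$ has the $k$-colorings as nodes, adjacent iff they differ on exactly one vertex. For $T\subseteq V(G)$, label each coloring $\gamma$ by $\gamma|_T$. A label component is a maximal set of colorings with the same label inducing a connected subgraph of $\mathcal{C}_k(G)$. The contracted solution graph $\mathcal{C}^c_k(G,T)=(H,\ell)$ has one node $x$ per label component $S_x$, distinct $x,y$ adjacent iff some $\gamma\in S_x,\gamma'\in S_y$ are adjacent in $\mathcal{C}_k(G)$, and $\ell(x)$ the common label on $S_x$. For $1\le m\le k$, a labeled graph $(H,\ell)$ is $(m,k)$-color-complete if there is a set $T$ with $|T|=m$ such that every label is a $k$-coloring of the complete graph on $T$, every such $k$-coloring is the label of exactly one node, and two nodes are adjacent iff their labels differ on exactly one element of $T$. $(H,\ell)$ satisfies the injective neighborhood property if any two distinct neighbors of any node have distinct labels. *)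

theory Defs
  imports Main
begin

definition simple_graph :: "'a set \<Rightarrow> ('a \<Rightarrow> 'a \<Rightarrow> bool) \<Rightarrow> bool" where
  "simple_graph V E \<longleftrightarrow> finite V \<and> (\<forall>u w. E u w \<longrightarrow> u \<in> V \<and> w \<in> V \<and> u \<noteq> w \<and> E w u)"

definition induced_cycle :: "'a set \<Rightarrow> ('a \<Rightarrow> 'a \<Rightarrow> bool) \<Rightarrow> 'a list \<Rightarrow> bool" where
  "induced_cycle V E cs \<longleftrightarrow> distinct cs \<and> set cs \<subseteq> V \<and>
     (\<forall>i < length cs. \<forall>j < length cs.
        E (cs ! i) (cs ! j) \<longleftrightarrow> (j = (i + 1) mod length cs \<or> i = (j + 1) mod length cs))"

definition chordal :: "'a set \<Rightarrow> ('a \<Rightarrow> 'a \<Rightarrow> bool) \<Rightarrow> bool" where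
  "chordal V E \<longleftrightarrow> \<not> (\<exists>cs. length cs > 3 \<and> induced_cycle V E cs)"

definition is_clique :: "'a set \<Rightarrow> ('a \<Rightarrow> 'a \<Rightarrow> bool) \<Rightarrow> 'a set \<Rightarrow> bool" where
  "is_clique V E T \<longleftrightarrow> T \<subseteq> V \<and> (\<forall>u\<in>T. \<forall>w\<in>T. u \<noteq> w \<longrightarrow> E u w)"

definition is_coloring :: "'a set \<Rightarrow> ('a \<Rightarrow> 'a \<Rightarrow> bool) \<Rightarrow> nat \<Rightarrow> ('a \<rightharpoonup> nat) \<Rightarrow> bool" where
  "is_coloring V E k \<alpha> \<longleftrightarrow> dom \<alpha> = V \<and> ran \<alpha> \<subseteq> {1..k} \<and>
     (\<forall>u w. E u w \<longrightarrow> \<alpha> u \<noteq> \<alpha> w)"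

definition colorable :: "'a set \<Rightarrow> ('a \<Rightarrow> 'a \<Rightarrow> bool) \<Rightarrow> nat \<Rightarrow> bool" where
  "colorable V E k \<longleftrightarrow> (\<exists>\<alpha>. is_coloring V E k \<alpha>)"

definition complete_edges :: "'a set \<Rightarrow> 'a \<Rightarrow> 'a \<Rightarrow> bool" where
  "complete_edges T u w \<longleftrightarrow> u \<in> T \<and> w \<in> T \<and> u \<noteq> w"

definition differ_on_one :: "'a set \<Rightarrow> ('a \<rightharpoonup> nat) \<Rightarrow> ('a \<rightharpoonup> nat) \<Rightarrow> bool" where
  "differ_on_one D \<alpha> \<beta> \<longleftrightarrow> card {v\<in>D. \<alpha> v \<noteq> \<beta> v} = 1"

(* adjacency in the reconfiguration graph C_k(G) *)
definition col_adj :: "'a set \<Rightarrow> ('a \<Rightarrow> 'a \<Rightarrow> bool) \<Rightarrow> nat \<Rightarrow> ('a \<rightharpoonup> nat) \<Rightarrow> ('a \<rightharpoonup> nat) \<Rightarrow> bool" where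
  "col_adj V E k \<alpha> \<beta> \<longleftrightarrow> is_coloring V E k \<alpha> \<and> is_coloring V E k \<beta> \<and> differ_on_one V \<alpha> \<beta>"

definition same_label_adj :: "'a set \<Rightarrow> ('a \<Rightarrow> 'a \<Rightarrow> bool) \<Rightarrow> nat \<Rightarrow> 'a set \<Rightarrow> ('a \<rightharpoonup> nat) \<Rightarrow> ('a \<rightharpoonup> nat) \<Rightarrow> bool" where
  "same_label_adj V E k T \<alpha> \<beta> \<longleftrightarrow> col_adj V E k \<alpha> \<beta> \<and> \<alpha> |` T = \<beta> |` T"

definition label_components :: "'a set \<Rightarrow> ('a \<Rightarrow> 'a \<Rightarrow> bool) \<Rightarrow> nat \<Rightarrow> 'a set \<Rightarrow> ('a \<rightharpoonup> nat) set set" where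
  "label_components V E k T =
     (\<lambda>\<gamma>. {\<gamma>'. (same_label_adj V E k T)\<^sup>*\<^sup>* \<gamma> \<gamma>'}) ` {\<gamma>. is_coloring V E k \<gamma>}"

(* contracted solution graph C^c_k(G,T) = (H, l): nodes, adjacency, labels *)
definition contr_nodes :: "'a set \<Rightarrow> ('a \<Rightarrow> 'a \<Rightarrow> bool) \<Rightarrow> nat \<Rightarrow> 'a set \<Rightarrow> ('a \<rightharpoonup> nat) set set" where
  "contr_nodes V E k T = label_components V E k T"

definition contr_adj :: "'a set \<Rightarrow> ('a \<Rightarrow> 'a \<Rightarrow> bool) \<Rightarrow> nat \<Rightarrow> ('a \<rightharpoonup> nat) set \<Rightarrow> ('a \<rightharpoonup> nat) set \<Rightarrow> bool" where
  "contr_adj V E k S S' \<longleftrightarrow> S \<noteq> S' \<and> (\<exists>\<gamma>\<in>S. \<exists>\<gamma>'\<in>S'. col_adj V E k \<gamma> \<gamma>')"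

definition contr_label :: "'a set \<Rightarrow> ('a \<rightharpoonup> nat) set \<Rightarrow> ('a \<rightharpoonup> nat)" where
  "contr_label T S = (THE c. \<forall>\<gamma>\<in>S. \<gamma> |` T = c)"

definition color_complete ::
  "nat \<Rightarrow> nat \<Rightarrow> 'n set \<Rightarrow> ('n \<Rightarrow> 'n \<Rightarrow> bool) \<Rightarrow> ('n \<Rightarrow> ('a \<rightharpoonup> nat)) \<Rightarrow> bool" where
  "color_complete m k N A l \<longleftrightarrow>
     (\<exists>T'. finite T' \<and> card T' = m \<and>
        (\<forall>x\<in>N. is_coloring T' (complete_edges T') k (l x)) \<and>
        (\<forall>c. is_coloring T' (complete_edges T') k c \<longrightarrow> (\<exists>!x. x \<in> N \<and> l x = c)) \<and>
        (\<forall>x\<in>N. \<forall>y\<in>N. x \<noteq> y \<longrightarrow> (A x y \<longleftrightarrow> differ_on_one T' (l x) (l y))))"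

definition has_cycle :: "'n set \<Rightarrow> ('n \<Rightarrow> 'n \<Rightarrow> bool) \<Rightarrow> bool" where
  "has_cycle N A \<longleftrightarrow> (\<exists>cs. length cs \<ge> 3 \<and> distinct cs \<and> set cs \<subseteq> N \<and>
      (\<forall>i < length cs. A (cs ! i) (cs ! ((i + 1) mod length cs))))"

definition is_forest :: "'n set \<Rightarrow> ('n \<Rightarrow> 'n \<Rightarrow> bool) \<Rightarrow> bool" where
  "is_forest N A \<longleftrightarrow> \<not> has_cycle N A"

definition injective_nbhd :: "'n set \<Rightarrow> ('n \<Rightarrow> 'n \<Rightarrow> bool) \<Rightarrow> ('n \<Rightarrow> 'b) \<Rightarrow> bool" where
  "injective_nbhd N A l \<longleftrightarrow>
     (\<forall>x\<in>N. \<forall>y\<in>N. \<forall>z\<in>N. A x y \<and> A x z \<and> y \<noteq> z \<longrightarrow> l y \<noteq> l z)"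

end

theory Submission
  imports Defs
begin


lemma cyc_iff:
  assumes "cs \<noteq> []"
  shows "(\<forall>i<length cs. A (cs!i) (cs!((i+1) mod length cs))) \<longleftrightarrow> successively A cs \<and> A (last cs) (hd cs)"
proof
  assume H: "\<forall>i<length cs. A (cs!i) (cs!((i+1) mod length cs))"
  have "successively A cs" unfolding successively_conv_nth
  proof (intro allI impI)
    fix i assume "Suc i < length cs"
    then show "A (cs ! i) (cs ! Suc i)" using H[rule_format, of i] by simp
  qed
  moreover have "A (last cs) (hd cs)"
    using H[rule_format, of "length cs - 1"] assms by (simp add: last_conv_nth hd_conv_nth)
  ultimately show "successively A cs \<and> A (last cs) (hd cs)" by blast
next
  assume H: "successively A cs \<and> A (last cs) (hd cs)"
  show "\<forall>i<length cs. A (cs!i) (cs!((i+1) mod length cs))"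
  proof (intro allI impI)
    fix i assume i: "i < length cs"
    show "A (cs!i) (cs!((i+1) mod length cs))"
    proof (cases "Suc i < length cs")
      case True then show ?thesis using H successively_nth by fastforce
    next
      case False
      then have "Suc i = length cs" using i by auto
      then have "i = length cs - 1" "(i+1) mod length cs = 0" by auto
      then show ?thesis using H assms by (simp add: last_conv_nth hd_conv_nth)
    qed
  qed
qed

lemma has_cycle_alt: "has_cycle N A \<longleftrightarrow> (\<exists>cs. length cs \<ge> 3 \<and> distinct cs \<and> set cs \<subseteq> N \<and>
   successively A cs \<and> A (last cs) (hd cs))"
  unfolding has_cycle_def
  by (metis (no_types, lifting) cyc_iff list.size(3) not_numeral_le_zero)

lemma path_lift:
  assumes h1: "\<forall>X\<in>N'. \<forall>Y\<in>N'. A' X Y \<longrightarrow> (\<exists>S\<in>N. \<exists>S'\<in>N. \<pi> S = X \<and> \<pi> S' = Y \<and> A S S')"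
  and h2: "\<forall>S\<in>N. \<forall>S'\<in>N. \<pi> S = \<pi> S' \<longrightarrow> S = S' \<or> A S S'"
  shows "successively A' Xs \<Longrightarrow> distinct Xs \<Longrightarrow> set Xs \<subseteq> N' \<Longrightarrow> Xs \<noteq> [] \<Longrightarrow> s \<in> N \<Longrightarrow> \<pi> s = hd Xs
    \<Longrightarrow> t \<in> N \<Longrightarrow> \<pi> t = last Xs \<Longrightarrow> \<exists>ws. ws \<noteq> [] \<and> hd ws = s \<and> last ws = t \<and> successively A ws
       \<and> distinct ws \<and> set ws \<subseteq> N \<and> (\<forall>w\<in>set ws. \<pi> w \<in> set Xs) \<and> length Xs \<le> length ws"
proof (induction Xs arbitrary: s)
  case Nil then show ?case by simp
next
  case (Cons X Xs)
  note pr = Cons.prems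
  note IH = Cons.IH
  show ?case
  proof (cases "Xs = []")
    case True
    then have "\<pi> s = \<pi> t" using pr by simp
    show ?thesis
    proof (cases "s = t")
      case True then show ?thesis using pr \<open>Xs = []\<close> by (intro exI[of _ "[s]"]) auto
    next
      case False
      then have "A s t" using h2 pr \<open>\<pi> s = \<pi> t\<close> by blast
      then show ?thesis using pr \<open>Xs = []\<close> False by (intro exI[of _ "[s,t]"]) auto
    qed
  next
    case False
    then obtain Y Ys where XsY: "Xs = Y # Ys" by (cases Xs) auto
    have "X \<in> N'" "Y \<in> N'" "A' X Y" using XsY pr by auto
    then obtain q j where oj: "q \<in> N" "j \<in> N" "\<pi> q = X" "\<pi> j = Y" "A q j" using h1 by blast
    have "successively A' Xs" "distinct Xs" "set Xs \<subseteq> N'" "\<pi> j = hd Xs" "\<pi> t = last Xs"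
      using pr XsY oj by auto
    then obtain ws where ws: "ws \<noteq> []" "hd ws = j" "last ws = t" "successively A ws"
       "distinct ws" "set ws \<subseteq> N" "\<forall>w\<in>set ws. \<pi> w \<in> set Xs" "length Xs \<le> length ws"
      using IH[of j] pr(7) oj(2) False by blast
    define pre where "pre = (if s = q then [s] else [s, q])"
    have sqX: "\<pi> s = X" using pr by simp
    have As: "s \<noteq> q \<Longrightarrow> A s q" using h2 pr(5) oj(1,3) sqX by metis
    have pre: "pre \<noteq> []" "hd pre = s" "last pre = q" "successively A pre" "distinct pre" "set pre \<subseteq> N"
      "\<forall>w\<in>set pre. \<pi> w = X"
      using As pr(5) oj(1,3) sqX unfolding pre_def by auto
    have "X \<notin> set Xs" using pr by auto
    then have disj: "set pre \<inter> set ws = {}" using pre(7) ws(7) by fastforce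
    have "successively A (pre @ ws)" using pre ws oj(5) by (simp add: successively_append_iff)
    moreover have "distinct (pre @ ws)" using pre ws disj by simp
    moreover have "length (X # Xs) \<le> length (pre @ ws)" using pre(1) ws(8) by (cases pre) auto
    moreover have "\<forall>w\<in>set (pre @ ws). \<pi> w \<in> set (X # Xs)" using pre(7) ws(7) by auto
    ultimately show ?thesis using pre ws
      by (intro exI[of _ "pre @ ws"]) auto
  qed
qed



lemma lift_cycle:
  assumes h1: "\<forall>X\<in>N'. \<forall>Y\<in>N'. A' X Y \<longrightarrow> (\<exists>S\<in>N. \<exists>S'\<in>N. \<pi> S = X \<and> \<pi> S' = Y \<and> A S S')"
  and h2: "\<forall>S\<in>N. \<forall>S'\<in>N. \<pi> S = \<pi> S' \<longrightarrow> S = S' \<or> A S S'"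
  and c: "has_cycle N' A'"
  shows "has_cycle N A"
proof -
  obtain Xs where X: "length Xs \<ge> 3" "distinct Xs" "set Xs \<subseteq> N'" "successively A' Xs" "A' (last Xs) (hd Xs)"
    using c unfolding has_cycle_alt by blast
  have ne: "Xs \<noteq> []" using X(1) by auto
  then have "last Xs \<in> N'" "hd Xs \<in> N'" using X(3) by auto
  then obtain t s where ts: "t \<in> N" "s \<in> N" "\<pi> t = last Xs" "\<pi> s = hd Xs" "A t s"
    using h1 X(5) by blast
  obtain ws where ws: "ws \<noteq> [] \<and> hd ws = s \<and> last ws = t \<and> successively A ws
       \<and> distinct ws \<and> set ws \<subseteq> N \<and> (\<forall>w\<in>set ws. \<pi> w \<in> set Xs) \<and> length Xs \<le> length ws"
    using path_lift[OF h1 h2 X(4) X(2) X(3) ne ts(2) ts(4) ts(1) ts(3)] by blast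
  show ?thesis unfolding has_cycle_alt
    apply (rule exI[of _ ws]) using ws X(1) ts(5) by auto
qed

lemma count_lemma:
  fixes g :: "'a \<Rightarrow> nat option"
  assumes "finite T" "v \<in> T" "k - 1 \<le> card T" "inj_on g (T - {v})"
    "g ` (T - {v}) \<subseteq> Some ` {1..k}" "x \<in> Some ` {1..k}" "y \<in> Some ` {1..k}" "z \<in> Some ` {1..k}"
    "x \<noteq> y" "x \<noteq> z" "y \<noteq> z" "x \<notin> g ` (T - {v})" "y \<notin> g ` (T - {v})" "z \<notin> g ` (T - {v})"
  shows False
proof -
  let ?M = "insert x (insert y (insert z (g ` (T - {v}))))"
  have f: "finite (g ` (T - {v}))" using assms(1) by simp
  have "card ?M = card (g ` (T - {v})) + 3" using assms f by simp
  also have "card (g ` (T - {v})) = card T - 1" using assms(1,2,4) by (simp add: card_image)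
  finally have c1: "card ?M = card T - 1 + 3" .
  have "?M \<subseteq> Some ` {1..k}" using assms by auto
  then have "card ?M \<le> card (Some ` {1..k})" by (intro card_mono) auto
  also have "\<dots> = k" by (simp add: card_image)
  finally show False using c1 assms(3) by linarith
qed

abbreviation "sla \<equiv> same_label_adj"

definition comp :: "'a set \<Rightarrow> ('a \<Rightarrow> 'a \<Rightarrow> bool) \<Rightarrow> nat \<Rightarrow> 'a set \<Rightarrow> ('a \<rightharpoonup> nat) \<Rightarrow> ('a \<rightharpoonup> nat) set"
  where "comp V E k U a = {b. (sla V E k U)\<^sup>*\<^sup>* a b}"

lemma differ_sym: assumes "differ_on_one D a b" shows "differ_on_one D b a"
proof -
  have "{x\<in>D. a x \<noteq> b x} = {x\<in>D. b x \<noteq> a x}" by auto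
  then show ?thesis using assms unfolding differ_on_one_def by simp
qed

lemma col_adj_sym: "col_adj V E k a b \<Longrightarrow> col_adj V E k b a"
  unfolding col_adj_def using differ_sym by blast

lemma sla_sym: "sla V E k U a b \<Longrightarrow> sla V E k U b a"
  unfolding same_label_adj_def using col_adj_sym by metis

lemma rtc_sym: "(sla V E k U)\<^sup>*\<^sup>* a b \<Longrightarrow> (sla V E k U)\<^sup>*\<^sup>* b a"
proof (induction rule: rtranclp_induct)
  case base then show ?case by simp
next
  case (step y z) then show ?case
    by (meson converse_rtranclp_into_rtranclp sla_sym)
qed

lemma rtc_label: "(sla V E k U)\<^sup>*\<^sup>* a b \<Longrightarrow> b |` U = a |` U"
  by (induction rule: rtranclp_induct) (auto simp: same_label_adj_def)

lemma rtc_col: "(sla V E k U)\<^sup>*\<^sup>* a b \<Longrightarrow> is_coloring V E k a \<Longrightarrow> is_coloring V E k b"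
  by (induction rule: rtranclp_induct) (auto simp: same_label_adj_def col_adj_def)

lemma comp_eq: "(sla V E k U)\<^sup>*\<^sup>* a b \<Longrightarrow> comp V E k U a = comp V E k U b"
proof -
  assume h: "(sla V E k U)\<^sup>*\<^sup>* a b"
  have h': "(sla V E k U)\<^sup>*\<^sup>* b a" using rtc_sym[OF h] .
  show ?thesis unfolding comp_def
    using rtranclp_trans[OF h] rtranclp_trans[OF h'] by blast
qed

lemma comp_self: "a \<in> comp V E k U a"
  unfolding comp_def by simp

lemma comp_mem: "b \<in> comp V E k U a \<longleftrightarrow> (sla V E k U)\<^sup>*\<^sup>* a b"
  unfolding comp_def by simp

lemma label_comp: "contr_label U (comp V E k U a) = a |` U"
  unfolding contr_label_def
proof (rule the_equality)
  show "\<forall>\<gamma>\<in>comp V E k U a. \<gamma> |` U = a |` U" using rtc_label comp_mem by metis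
next
  fix c assume "\<forall>\<gamma>\<in>comp V E k U a. \<gamma> |` U = c"
  then show "c = a |` U" using comp_self by metis
qed

lemma nodes_eq: "contr_nodes V E k U = comp V E k U ` {a. is_coloring V E k a}"
  unfolding contr_nodes_def label_components_def comp_def by simp

lemma restr_sub: "A \<subseteq> B \<Longrightarrow> a |` B = b |` B \<Longrightarrow> a |` A = b |` A"
proof -
  assume h: "A \<subseteq> B" "a |` B = b |` B"
  show ?thesis
  proof
    fix x show "(a |` A) x = (b |` A) x"
      using fun_cong[OF h(2), of x] h(1) by (cases "x \<in> A") (auto simp: restrict_map_def split: if_splits)
  qed
qed

lemma sla_mono: "A \<subseteq> B \<Longrightarrow> sla V E k B a b \<Longrightarrow> sla V E k A a b"
  unfolding same_label_adj_def using restr_sub by blast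

lemma rtc_mono: "A \<subseteq> B \<Longrightarrow> (sla V E k B)\<^sup>*\<^sup>* a b \<Longrightarrow> (sla V E k A)\<^sup>*\<^sup>* a b"
proof -
  assume "A \<subseteq> B" "(sla V E k B)\<^sup>*\<^sup>* a b"
  then show ?thesis
    by (induction rule: rtranclp_induct[OF \<open>(sla V E k B)\<^sup>*\<^sup>* a b\<close>])
       (auto intro: rtranclp.rtrancl_into_rtrancl sla_mono)
qed

lemma col_adj_unique:
  assumes "col_adj V E k a b"
  obtains u where "u \<in> V" "a u \<noteq> b u" "\<And>x. x \<noteq> u \<Longrightarrow> a x = b x"
proof -
  have ca: "dom a = V" "dom b = V" using assms unfolding col_adj_def is_coloring_def by auto
  obtain u where u: "{x\<in>V. a x \<noteq> b x} = {u}"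
    using assms unfolding col_adj_def differ_on_one_def by (meson card_1_singletonE)
  have "\<And>x. x \<noteq> u \<Longrightarrow> a x = b x"
  proof -
    fix x assume "x \<noteq> u"
    show "a x = b x"
    proof (cases "x \<in> V")
      case True then show ?thesis using u \<open>x \<noteq> u\<close> by blast
    next
      case False then have "a x = None" "b x = None" using ca by auto
      then show ?thesis by simp
    qed
  qed
  then show ?thesis using that u by blast
qed

lemma col_val: "is_coloring V E k a \<Longrightarrow> u \<in> V \<Longrightarrow> a u \<in> Some ` {1..k}"
proof -
  assume h: "is_coloring V E k a" "u \<in> V"
  then obtain n where n: "a u = Some n" unfolding is_coloring_def by blast
  then have "n \<in> ran a" by (auto simp: ran_def)
  then have "n \<in> {1..k}" using h(1) unfolding is_coloring_def by blast
  then show ?thesis using n by blast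
qed

lemma col_clique: "is_coloring V E k a \<Longrightarrow> is_clique V E T \<Longrightarrow> u \<in> T \<Longrightarrow> w \<in> T \<Longrightarrow> u \<noteq> w \<Longrightarrow> a u \<noteq> a w"
  unfolding is_coloring_def is_clique_def by blast

lemma vdiff: "a |` T \<noteq> b |` T \<Longrightarrow> a |` (T - {v}) = b |` (T - {v}) \<Longrightarrow> a v \<noteq> b v"
proof
  assume h: "a |` T \<noteq> b |` T" "a |` (T - {v}) = b |` (T - {v})" "a v = b v"
  have "a |` T = b |` T"
  proof
    fix x show "(a |` T) x = (b |` T) x"
      using h(3) fun_cong[OF h(2), of x] by (cases "x \<in> T"; cases "x = v") auto
  qed
  then show False using h(1) by simp
qed

lemma restr_val: "a |` A = b |` A \<Longrightarrow> x \<in> A \<Longrightarrow> a x = b x"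
  by (metis restrict_in)

lemma contr_adj_sym: "contr_adj V E k S S' \<Longrightarrow> contr_adj V E k S' S"
  unfolding contr_adj_def using col_adj_sym by metis

lemma adj_label_diff:
  assumes "contr_adj V E k (comp V E k U a) (comp V E k U b)"
  shows "a |` U \<noteq> b |` U"
proof
  assume eq: "a |` U = b |` U"
  obtain a' b' where ab: "a' \<in> comp V E k U a" "b' \<in> comp V E k U b" "col_adj V E k a' b'"
    "comp V E k U a \<noteq> comp V E k U b"
    using assms unfolding contr_adj_def by blast
  have "a' |` U = b' |` U" using ab(1,2) eq rtc_label comp_mem by metis
  then have "sla V E k U a' b'" using ab(3) unfolding same_label_adj_def by simp
  then have "comp V E k U a' = comp V E k U b'" using comp_eq by (metis r_into_rtranclp)
  then show False using ab comp_eq comp_mem by metis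
qed



lemma ran_img: "ran m = (\<lambda>x. the (m x)) ` dom m"
  by (force simp: ran_def dom_def)

lemma card_ran: "finite (dom m) \<Longrightarrow> card (ran m) \<le> card (dom m)"
  unfolding ran_img by (rule card_image_le)

lemma restr_self: "dom c = A \<Longrightarrow> c |` A = c"
proof
  fix x assume "dom c = A" then show "(c |` A) x = c x"
    by (cases "x \<in> A") (auto simp: restrict_map_def)
qed

lemma ext_col:
  assumes "is_coloring A (complete_edges A) k c" "p \<in> {1..k}" "p \<notin> ran c" "v \<notin> A"
  shows "is_coloring (insert v A) (complete_edges (insert v A)) k (c(v \<mapsto> p))"
proof -
  have dc: "dom c = A" using assms(1) unfolding is_coloring_def by blast
  have cv: "c v = None" using dc assms(4) by blast
  have "ran (c(v \<mapsto> p)) \<subseteq> {1..k}" using cv assms(1,2) unfolding is_coloring_def by simp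
  moreover have "dom (c(v \<mapsto> p)) = insert v A" using dc by simp
  moreover have "\<forall>u w. complete_edges (insert v A) u w \<longrightarrow> (c(v \<mapsto> p)) u \<noteq> (c(v \<mapsto> p)) w"
  proof (intro allI impI)
    fix u w assume e: "complete_edges (insert v A) u w"
    then have uw: "u \<in> insert v A" "w \<in> insert v A" "u \<noteq> w" unfolding complete_edges_def by auto
    show "(c(v \<mapsto> p)) u \<noteq> (c(v \<mapsto> p)) w"
    proof (cases "u = v")
      case True
      then have "w \<in> A" using uw by auto
      then obtain q where "c w = Some q" using dc by blast
      then have "q \<in> ran c" by (rule ranI)
      then show ?thesis using True uw(3) \<open>c w = Some q\<close> assms(3) by auto
    next
      case False
      show ?thesis
      proof (cases "w = v")
        case True
        then have "u \<in> A" using uw False by auto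
        then obtain q where "c u = Some q" using dc by blast
        then have "q \<in> ran c" by (rule ranI)
        then show ?thesis using True False \<open>c u = Some q\<close> assms(3) by auto
      next
        case False2: False
        have "complete_edges A u w" using uw False False2 unfolding complete_edges_def by auto
        then show ?thesis using assms(1) False False2 unfolding is_coloring_def by auto
      qed
    qed
  qed
  ultimately show ?thesis unfolding is_coloring_def by blast
qed



context
  fixes V :: "'a set" and E k T v
  assumes sg: "simple_graph V E" and cl: "is_clique V E T" and cT: "k - 1 \<le> card T" and vT: "v \<in> T"
begin

lemma TV: "T \<subseteq> V" using cl unfolding is_clique_def by blast
lemma finT: "finite T" using sg TV unfolding simple_graph_def by (meson finite_subset)

lemma not_in_img:
  assumes "is_coloring V E k d" "d |` (T - {v}) = g |` (T - {v})"
  shows "d v \<notin> g ` (T - {v})"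
proof
  assume "d v \<in> g ` (T - {v})"
  then obtain t where t: "t \<in> T - {v}" "d v = g t" by blast
  then have "g t = d t" using restr_val[OF assms(2)] by simp
  then show False using col_clique[OF assms(1) cl vT, of t] t by auto
qed

lemma three:
  assumes "is_coloring V E k g" "is_coloring V E k d" "is_coloring V E k e"
    "d |` (T - {v}) = g |` (T - {v})" "e |` (T - {v}) = g |` (T - {v})"
    "g v \<noteq> d v" "g v \<noteq> e v" "d v \<noteq> e v"
  shows False
proof -
  have vV: "v \<in> V" using TV vT by blast
  have i: "inj_on g (T - {v})" unfolding inj_on_def using col_clique[OF assms(1) cl] by blast
  have s: "g ` (T - {v}) \<subseteq> Some ` {1..k}" using col_val[OF assms(1)] TV by blast
  have x: "g v \<in> Some ` {1..k}" by (rule col_val[OF assms(1) vV])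
  have y: "d v \<in> Some ` {1..k}" by (rule col_val[OF assms(2) vV])
  have z: "e v \<in> Some ` {1..k}" by (rule col_val[OF assms(3) vV])
  have nx: "g v \<notin> g ` (T - {v})" by (rule not_in_img[OF assms(1) refl])
  have ny: "d v \<notin> g ` (T - {v})" by (rule not_in_img[OF assms(2) assms(4)])
  have nz: "e v \<notin> g ` (T - {v})" by (rule not_in_img[OF assms(3) assms(5)])
  show False
    by (rule count_lemma[OF finT vT cT i s x y z assms(6-8) nx ny nz])
qed

abbreviation "col \<equiv> is_coloring V E k"
abbreviation "cT \<equiv> comp V E k T"
abbreviation "c' \<equiv> comp V E k (T - {v})"
abbreviation "R' \<equiv> sla V E k (T - {v})"
abbreviation "RT \<equiv> sla V E k T"

lemma Tv_sub: "T - {v} \<subseteq> T" by blast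

lemma Qlem:
  assumes inj: "injective_nbhd (contr_nodes V E k T) (contr_adj V E k) (contr_label T)"
    and g1: "col g1" and r: "R'\<^sup>*\<^sup>* g1 d"
  shows "d \<in> cT g1 \<or> contr_adj V E k (cT g1) (cT d)"
  using r
proof (induction rule: rtranclp_induct)
  case base then show ?case by (simp add: comp_self)
next
  case (step d d')
  have cd: "col d" using rtc_col[OF step(1) g1] .
  have cd': "col d'" using step(2) unfolding same_label_adj_def col_adj_def by blast
  have adj: "col_adj V E k d d'" using step(2) unfolding same_label_adj_def by blast
  have ld: "d |` (T - {v}) = g1 |` (T - {v})" using rtc_label[OF step(1)] .
  have ld': "d' |` (T - {v}) = g1 |` (T - {v})" using ld step(2) unfolding same_label_adj_def by simp
  show ?case
  proof (cases "d' |` T = d |` T")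
    case True
    then have "RT d d'" using adj unfolding same_label_adj_def by simp
    then have e: "cT d = cT d'" by (intro comp_eq r_into_rtranclp)
    show ?thesis using step(3)
    proof
      assume "d \<in> cT g1"
      then have "RT\<^sup>*\<^sup>* g1 d'" using \<open>RT d d'\<close> by (simp add: comp_mem)
      then show ?thesis by (simp add: comp_mem)
    next
      assume "contr_adj V E k (cT g1) (cT d)"
      then show ?thesis using e by simp
    qed
  next
    case False
    have nd: "cT d \<noteq> cT d'"
    proof
      assume "cT d = cT d'"
      then have "d' \<in> cT d" by (simp add: comp_self)
      then have "RT\<^sup>*\<^sup>* d d'" by (simp add: comp_mem)
      then show False using False rtc_label by blast
    qed
    have adj2: "contr_adj V E k (cT d) (cT d')" unfolding contr_adj_def
      using nd adj comp_self[of d] comp_self[of d'] by blast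
    show ?thesis using step(3)
    proof
      assume "d \<in> cT g1"
      then have "cT g1 = cT d" by (intro comp_eq) (simp add: comp_mem)
      then show ?thesis using adj2 by simp
    next
      assume a1: "contr_adj V E k (cT g1) (cT d)"
      show ?thesis
      proof (cases "cT d' = cT g1")
        case True then show ?thesis using comp_self[of d' V E k T] by simp
      next
        case ne: False
        have nodes: "cT d \<in> contr_nodes V E k T" "cT g1 \<in> contr_nodes V E k T" "cT d' \<in> contr_nodes V E k T"
          using nodes_eq cd cd' g1 by blast+
        have "contr_label T (cT g1) \<noteq> contr_label T (cT d')"
          using inj nodes contr_adj_sym[OF a1] adj2 ne unfolding injective_nbhd_def by (metis (no_types))
        then have l1: "g1 |` T \<noteq> d' |` T" by (simp add: label_comp)
        have l2: "g1 |` T \<noteq> d |` T" using adj_label_diff[OF a1] .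
        show ?thesis
        proof (rule FalseE, rule three[OF g1 cd cd' ld ld'])
          show "g1 v \<noteq> d v" using vdiff[OF l2] ld by simp
          show "g1 v \<noteq> d' v" using vdiff[OF l1] ld' by simp
          show "d v \<noteq> d' v" using vdiff[of d' T d v] False ld ld' by simp
        qed
      qed
    qed
  qed
qed

lemma Alem:
  assumes inj: "injective_nbhd (contr_nodes V E k T) (contr_adj V E k) (contr_label T)"
    and g1: "col g1" and r: "R'\<^sup>*\<^sup>* g1 d" and l: "d |` T = g1 |` T"
  shows "d \<in> cT g1"
  using Qlem[OF inj g1 r] adj_label_diff[of V E k T g1 d] l by argo


definition "pimap S = {g'. \<exists>g\<in>S. R'\<^sup>*\<^sup>* g g'}"

lemma pi_comp: "pimap (cT a) = c' a"
proof
  show "pimap (cT a) \<subseteq> c' a"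
  proof
    fix g' assume "g' \<in> pimap (cT a)"
    then obtain g where g: "g \<in> cT a" "R'\<^sup>*\<^sup>* g g'" unfolding pimap_def by blast
    have "R'\<^sup>*\<^sup>* a g" using rtc_mono[OF Tv_sub] g(1) by (simp add: comp_mem)
    then show "g' \<in> c' a" using g(2) by (simp add: comp_mem)
  qed
next
  show "c' a \<subseteq> pimap (cT a)" unfolding pimap_def using comp_self[of a V E k T] by (auto simp: comp_mem)
qed

lemma comp_eq': assumes "b \<in> comp V E k U a" shows "comp V E k U a = comp V E k U b"
proof -
  have "(sla V E k U)\<^sup>*\<^sup>* a b" using assms by (simp add: comp_mem)
  then show ?thesis by (rule comp_eq)
qed

lemma cT_c': assumes "cT a = cT b" shows "c' a = c' b"
proof -
  have "pimap (cT a) = pimap (cT b)" using assms by simp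
  then show ?thesis by (simp add: pi_comp)
qed

lemma forest_part:
  assumes forest: "is_forest (contr_nodes V E k T) (contr_adj V E k)"
    and inj: "injective_nbhd (contr_nodes V E k T) (contr_adj V E k) (contr_label T)"
  shows "is_forest (contr_nodes V E k (T - {v})) (contr_adj V E k)"
proof -
  have h1: "\<forall>X\<in>contr_nodes V E k (T - {v}). \<forall>Y\<in>contr_nodes V E k (T - {v}). contr_adj V E k X Y \<longrightarrow>
     (\<exists>S\<in>contr_nodes V E k T. \<exists>S'\<in>contr_nodes V E k T. pimap S = X \<and> pimap S' = Y \<and> contr_adj V E k S S')"
  proof (intro ballI impI)
    fix X Y assume XY: "X \<in> contr_nodes V E k (T - {v})" "Y \<in> contr_nodes V E k (T - {v})" "contr_adj V E k X Y"
    obtain a where a: "X = c' a" using XY(1) unfolding nodes_eq by blast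
    obtain b where b: "Y = c' b" using XY(2) unfolding nodes_eq by blast
    note ab = a b
    obtain g d where gd: "g \<in> X" "d \<in> Y" "col_adj V E k g d" "X \<noteq> Y" using XY(3) unfolding contr_adj_def by blast
    have cg: "col g" "col d" using gd(3) unfolding col_adj_def by auto
    have X: "X = c' g" using gd(1) ab(1) comp_eq'[of g "T - {v}" a] by simp
    have Y: "Y = c' d" using gd(2) ab(2) comp_eq'[of d "T - {v}" b] by simp
    have ne: "cT g \<noteq> cT d" using X Y gd(4) cT_c' by blast
    have "contr_adj V E k (cT g) (cT d)" unfolding contr_adj_def
      using ne gd(3) comp_self[of g V E k T] comp_self[of d V E k T] by blast
    moreover have "cT g \<in> contr_nodes V E k T" "cT d \<in> contr_nodes V E k T" using cg unfolding nodes_eq by blast+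
    ultimately show "\<exists>S\<in>contr_nodes V E k T. \<exists>S'\<in>contr_nodes V E k T. pimap S = X \<and> pimap S' = Y \<and> contr_adj V E k S S'"
      apply - apply (rule bexI[of _ "cT g"], rule bexI[of _ "cT d"])
      using X Y by (simp_all add: pi_comp)
  qed
  have h2: "\<forall>S\<in>contr_nodes V E k T. \<forall>S'\<in>contr_nodes V E k T. pimap S = pimap S' \<longrightarrow> S = S' \<or> contr_adj V E k S S'"
  proof (intro ballI impI)
    fix S S' assume SS: "S \<in> contr_nodes V E k T" "S' \<in> contr_nodes V E k T" "pimap S = pimap S'"
    obtain a where a: "S = cT a" "col a" using SS(1) unfolding nodes_eq by blast
    obtain b where b: "S' = cT b" "col b" using SS(2) unfolding nodes_eq by blast
    note ab = a(1) b(1) a(2) b(2)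
    have "c' a = c' b" using SS(3) unfolding a(1) b(1) pi_comp .
    then have "b \<in> c' a" using comp_self[of b V E k "T - {v}"] by simp
    then have "R'\<^sup>*\<^sup>* a b" by (simp add: comp_mem)
    then have "b \<in> cT a \<or> contr_adj V E k (cT a) (cT b)" using Qlem[OF inj ab(3)] by blast
    then show "S = S' \<or> contr_adj V E k S S'"
    proof
      assume "b \<in> cT a" then have "cT a = cT b" by (intro comp_eq) (simp add: comp_mem)
      then show ?thesis using ab by simp
    qed (use ab in simp)
  qed
  show ?thesis unfolding is_forest_def
  proof
    assume "has_cycle (contr_nodes V E k (T - {v})) (contr_adj V E k)"
    then have "has_cycle (contr_nodes V E k T) (contr_adj V E k)"
      by (rule lift_cycle[where \<pi>=pimap, OF h1 h2])
    then show False using forest unfolding is_forest_def by blast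
  qed
qed

lemma inj_part:
  assumes inj: "injective_nbhd (contr_nodes V E k T) (contr_adj V E k) (contr_label T)"
  shows "injective_nbhd (contr_nodes V E k (T - {v})) (contr_adj V E k) (contr_label (T - {v}))"
  unfolding injective_nbhd_def
proof (intro ballI impI notI)
  fix x y z assume xyz: "x \<in> contr_nodes V E k (T - {v})" "y \<in> contr_nodes V E k (T - {v})"
    "z \<in> contr_nodes V E k (T - {v})"
    and adj: "contr_adj V E k x y \<and> contr_adj V E k x z \<and> y \<noteq> z"
    and lab: "contr_label (T - {v}) y = contr_label (T - {v}) z"
  obtain a where a: "x = c' a" using xyz(1) unfolding nodes_eq by blast
  obtain b where b: "y = c' b" using xyz(2) unfolding nodes_eq by blast
  obtain e where e: "z = c' e" using xyz(3) unfolding nodes_eq by blast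
  note abe = a b e
  obtain g1 g2 where g12: "g1 \<in> x" "g2 \<in> y" "col_adj V E k g1 g2" "x \<noteq> y"
    using adj unfolding contr_adj_def by blast
  obtain g3 g4 where g34: "g3 \<in> x" "g4 \<in> z" "col_adj V E k g3 g4" "x \<noteq> z"
    using adj unfolding contr_adj_def by blast
  have cols: "col g1" "col g2" "col g3" "col g4" using g12(3) g34(3) unfolding col_adj_def by auto
  have X1: "x = c' g1" using g12(1) abe(1) comp_eq'[of g1 "T - {v}" a] by simp
  have X3: "x = c' g3" using g34(1) abe(1) comp_eq'[of g3 "T - {v}" a] by simp
  have Y2: "y = c' g2" using g12(2) abe(2) comp_eq'[of g2 "T - {v}" b] by simp
  have Z4: "z = c' g4" using g34(2) abe(3) comp_eq'[of g4 "T - {v}" e] by simp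
  have l24: "g2 |` (T - {v}) = g4 |` (T - {v})" using lab Y2 Z4 by (simp add: label_comp)
  have r13: "R'\<^sup>*\<^sup>* g1 g3" using X1 X3 comp_self[of g3 V E k "T - {v}"] by (simp add: comp_mem)
  have l13: "g3 |` (T - {v}) = g1 |` (T - {v})" using rtc_label[OF r13] .
  have l12: "g1 |` (T - {v}) \<noteq> g2 |` (T - {v})"
  proof
    assume "g1 |` (T - {v}) = g2 |` (T - {v})"
    then have "R' g1 g2" using g12(3) unfolding same_label_adj_def by simp
    then have "c' g1 = c' g2" by (intro comp_eq r_into_rtranclp)
    then show False using X1 Y2 g12(4) by simp
  qed
  then obtain x0 where x0: "(g1 |` (T - {v})) x0 \<noteq> (g2 |` (T - {v})) x0" by (meson ext)
  then have x0T: "x0 \<in> T - {v}" by (cases "x0 \<in> T - {v}") auto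
  then have d12: "g1 x0 \<noteq> g2 x0" using x0 by simp
  obtain u1 where u1: "u1 \<in> V" "g1 u1 \<noteq> g2 u1" "\<And>x. x \<noteq> u1 \<Longrightarrow> g1 x = g2 x"
    using col_adj_unique[OF g12(3)] by blast
  have "x0 = u1" using u1(3) d12 by blast
  then have v12: "g1 v = g2 v" using u1(3) x0T by auto
  have d34: "g3 x0 \<noteq> g4 x0" using d12 restr_val[OF l13 x0T] restr_val[OF l24 x0T] by simp
  obtain u3 where u3: "u3 \<in> V" "g3 u3 \<noteq> g4 u3" "\<And>x. x \<noteq> u3 \<Longrightarrow> g3 x = g4 x"
    using col_adj_unique[OF g34(3)] by blast
  have "x0 = u3" using u3(3) d34 by blast
  then have v34: "g3 v = g4 v" using u3(3) x0T by auto
  show False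
  proof (cases "g1 |` T = g3 |` T")
    case True
    have "g3 \<in> cT g1" using Alem[OF inj cols(1) r13] True by simp
    then have S13: "cT g1 = cT g3" by (rule comp_eq')
    have n2: "cT g1 \<noteq> cT g2" using X1 Y2 g12(4) cT_c' by blast
    have n4: "cT g3 \<noteq> cT g4" using X3 Z4 g34(4) cT_c' by blast
    have n24: "cT g2 \<noteq> cT g4" using Y2 Z4 adj cT_c' by blast
    have a2: "contr_adj V E k (cT g1) (cT g2)" unfolding contr_adj_def
      using n2 g12(3) comp_self[of g1 V E k T] comp_self[of g2 V E k T] by blast
    have a4: "contr_adj V E k (cT g1) (cT g4)" unfolding contr_adj_def
      using n4 S13 g34(3) comp_self[of g3 V E k T] comp_self[of g4 V E k T] by auto
    have nodes: "cT g1 \<in> contr_nodes V E k T" "cT g2 \<in> contr_nodes V E k T" "cT g4 \<in> contr_nodes V E k T"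
      using cols unfolding nodes_eq by blast+
    have "contr_label T (cT g2) \<noteq> contr_label T (cT g4)"
      using inj nodes a2 a4 n24 unfolding injective_nbhd_def by (metis (no_types))
    then have "g2 |` T \<noteq> g4 |` T" by (simp add: label_comp)
    then have "g2 v \<noteq> g4 v" using vdiff[of g2 T g4 v] l24 by simp
    moreover have "g1 v = g3 v" using restr_val[OF True vT] .
    ultimately show False using v12 v34 by simp
  next
    case False
    have n13: "g1 v \<noteq> g3 v" using vdiff[OF False] l13 by simp
    have vV: "v \<in> V" using TV vT by blast
    have x0V: "x0 \<in> V" using TV x0T by blast
    have i: "inj_on g2 (T - {v})" unfolding inj_on_def using col_clique[OF cols(2) cl] by blast
    have s: "g2 ` (T - {v}) \<subseteq> Some ` {1..k}" using col_val[OF cols(2)] TV by blast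
    have x: "g2 v \<in> Some ` {1..k}" by (rule col_val[OF cols(2) vV])
    have y: "g4 v \<in> Some ` {1..k}" by (rule col_val[OF cols(4) vV])
    have z: "g1 x0 \<in> Some ` {1..k}" by (rule col_val[OF cols(1) x0V])
    have nx: "g2 v \<notin> g2 ` (T - {v})" by (rule not_in_img[OF cols(2) refl])
    have ny: "g4 v \<notin> g2 ` (T - {v})" by (rule not_in_img[OF cols(4) l24[symmetric]])
    have nz: "g1 x0 \<notin> g2 ` (T - {v})"
    proof
      assume "g1 x0 \<in> g2 ` (T - {v})"
      then obtain t where t: "t \<in> T - {v}" "g1 x0 = g2 t" by blast
      show False
      proof (cases "t = x0")
        case True then show False using t d12 by simp
      next
        case False
        then have "g2 t = g1 t" using u1(3)[of t] \<open>x0 = u1\<close> by simp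
        then show False using col_clique[OF cols(1) cl, of t x0] t x0T False by auto
      qed
    qed
    have xy: "g2 v \<noteq> g4 v" using n13 v12 v34 by simp
    have xz: "g2 v \<noteq> g1 x0" using v12 col_clique[OF cols(1) cl vT, of x0] x0T by auto
    have yz: "g4 v \<noteq> g1 x0"
      using v34 col_clique[OF cols(3) cl vT, of x0] x0T restr_val[OF l13 x0T] by auto
    show False by (rule count_lemma[OF finT vT cT i s x y z xy xz yz nx ny nz])
  qed
qed

lemma rcol: "is_coloring V E k a \<Longrightarrow> A \<subseteq> T \<Longrightarrow> is_coloring A (complete_edges A) k (a |` A)"
proof -
  assume a: "is_coloring V E k a" and A: "A \<subseteq> T"
  have "dom (a |` A) = A" using a A TV unfolding is_coloring_def by auto
  moreover have "ran (a |` A) \<subseteq> {1..k}" using a unfolding is_coloring_def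
    by (auto dest!: ran_restrictD intro: ranI)
  moreover have "\<forall>u w. complete_edges A u w \<longrightarrow> (a |` A) u \<noteq> (a |` A) w"
    using col_clique[OF a cl] A unfolding complete_edges_def by auto
  ultimately show ?thesis unfolding is_coloring_def by blast
qed


lemma uniq_lem:
  assumes P2: "\<forall>c. is_coloring T (complete_edges T) k c \<longrightarrow> (\<exists>!x. x \<in> contr_nodes V E k T \<and> contr_label T x = c)"
    and P3: "\<forall>x\<in>contr_nodes V E k T. \<forall>y\<in>contr_nodes V E k T. x \<noteq> y \<longrightarrow> (contr_adj V E k x y \<longleftrightarrow> differ_on_one T (contr_label T x) (contr_label T y))"
    and gd: "col g" "col d" "g |` (T - {v}) = d |` (T - {v})"
  shows "R'\<^sup>*\<^sup>* g d"
proof -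
  have ng: "cT g \<in> contr_nodes V E k T" "cT d \<in> contr_nodes V E k T" using gd unfolding nodes_eq by blast+
  show ?thesis
  proof (cases "g |` T = d |` T")
    case True
    have "is_coloring T (complete_edges T) k (g |` T)" using rcol[OF gd(1)] by simp
    then have ex: "\<exists>!x. x \<in> contr_nodes V E k T \<and> contr_label T x = g |` T" using P2 by blast
    have "contr_label T (cT g) = g |` T" "contr_label T (cT d) = g |` T" using True by (simp_all add: label_comp)
    then have "cT g = cT d" using ng ex by blast
    then have "d \<in> cT g" using comp_self[of d V E k T] by simp
    then have "RT\<^sup>*\<^sup>* g d" by (simp add: comp_mem)
    then show ?thesis by (rule rtc_mono[OF Tv_sub])
  next
    case False
    have ne: "cT g \<noteq> cT d"
    proof
      assume "cT g = cT d"
      then have "contr_label T (cT g) = contr_label T (cT d)" by simp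
      then show False using False by (simp add: label_comp)
    qed
    have "{u \<in> T. (g |` T) u \<noteq> (d |` T) u} = {v}"
    proof (intro equalityI subsetI)
      fix u assume "u \<in> {u \<in> T. (g |` T) u \<noteq> (d |` T) u}"
      then have "u \<in> T" "g u \<noteq> d u" by auto
      then show "u \<in> {v}" using restr_val[OF gd(3), of u] by (cases "u = v") auto
    next
      fix u assume "u \<in> {v}"
      then show "u \<in> {u \<in> T. (g |` T) u \<noteq> (d |` T) u}" using vdiff[OF False gd(3)] vT by auto
    qed
    then have "differ_on_one T (contr_label T (cT g)) (contr_label T (cT d))"
      unfolding differ_on_one_def by (simp add: label_comp)
    then have "contr_adj V E k (cT g) (cT d)" using P3 ng ne by blast
    then obtain g' d' where gd': "g' \<in> cT g" "d' \<in> cT d" "col_adj V E k g' d'"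
      unfolding contr_adj_def by blast
    have r1: "RT\<^sup>*\<^sup>* g g'" "RT\<^sup>*\<^sup>* d d'" using gd' by (simp_all add: comp_mem)
    have l1: "g' |` T = g |` T" "d' |` T = d |` T" using rtc_label r1 by blast+
    have "g' |` (T - {v}) = g |` (T - {v})" using restr_sub[OF Tv_sub l1(1)] .
    moreover have "d' |` (T - {v}) = d |` (T - {v})" using restr_sub[OF Tv_sub l1(2)] .
    ultimately have "g' |` (T - {v}) = d' |` (T - {v})" using gd(3) by simp
    then have st: "R' g' d'" using gd'(3) unfolding same_label_adj_def by simp
    have a1: "R'\<^sup>*\<^sup>* g g'" using rtc_mono[OF Tv_sub r1(1)] .
    have a2: "R'\<^sup>*\<^sup>* d' d" using rtc_sym[OF rtc_mono[OF Tv_sub r1(2)]] .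
    have "R'\<^sup>*\<^sup>* g d'"
      apply (rule rtranclp.rtrancl_into_rtrancl)
       apply (rule a1)
      apply (rule st)
      done
    then show ?thesis using a2 by (rule rtranclp_trans)
  qed
qed

lemma restr_upd: "dom c = T - {v} \<Longrightarrow> g |` T = c(v \<mapsto> p) \<Longrightarrow> g |` (T - {v}) = c"
proof -
  assume dc: "dom c = T - {v}" and gT: "g |` T = c(v \<mapsto> p)"
  show ?thesis
  proof
    fix u show "(g |` (T - {v})) u = c u"
    proof (cases "u \<in> T - {v}")
      case True
      then have "(g |` T) u = c u" using gT by simp
      then show ?thesis using True by simp
    next
      case False then show ?thesis using dc by auto
    qed
  qed
qed

lemma cc_part:
  assumes cc: "color_complete (k - 1) k (contr_nodes V E k T) (contr_adj V E k) (contr_label T)"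
    and colb: "colorable V E k"
  shows "color_complete (k - 2) k (contr_nodes V E k (T - {v})) (contr_adj V E k) (contr_label (T - {v}))"
proof -
  obtain T0 where T0: "finite T0" "card T0 = k - 1"
    "\<forall>x\<in>contr_nodes V E k T. is_coloring T0 (complete_edges T0) k (contr_label T x)"
    "\<forall>c. is_coloring T0 (complete_edges T0) k c \<longrightarrow> (\<exists>!x. x \<in> contr_nodes V E k T \<and> contr_label T x = c)"
    "\<forall>x\<in>contr_nodes V E k T. \<forall>y\<in>contr_nodes V E k T. x \<noteq> y \<longrightarrow> (contr_adj V E k x y \<longleftrightarrow> differ_on_one T0 (contr_label T x) (contr_label T y))"
    using cc unfolding color_complete_def by blast
  obtain g0 where g0: "col g0" using colb unfolding colorable_def by blast
  have "cT g0 \<in> contr_nodes V E k T" using g0 unfolding nodes_eq by blast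
  then have "is_coloring T0 (complete_edges T0) k (contr_label T (cT g0))" using T0(3) by blast
  then have "is_coloring T0 (complete_edges T0) k (g0 |` T)" by (simp add: label_comp)
  then have "dom (g0 |` T) = T0" unfolding is_coloring_def by blast
  moreover have "dom (g0 |` T) = T" using g0 TV unfolding is_coloring_def by auto
  ultimately have T0T: "T0 = T" by simp
  have cardT: "card T = k - 1" using T0 T0T by simp
  have "card T > 0" using finT vT by (auto simp: card_gt_0_iff)
  then have k2: "k \<ge> 2" using cardT by simp
  have cardT': "card (T - {v}) = k - 2" using cardT finT vT by simp
  note P2 = T0(4)[unfolded T0T]
  note P3 = T0(5)[unfolded T0T]
  note U = uniq_lem[OF P2 P3]
  have Tins: "insert v (T - {v}) = T" using vT by blast
  show ?thesis unfolding color_complete_def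
  proof (intro exI[of _ "T - {v}"] conjI)
    show "finite (T - {v})" using finT by simp
    show "card (T - {v}) = k - 2" by (rule cardT')
    show "\<forall>x\<in>contr_nodes V E k (T - {v}). is_coloring (T - {v}) (complete_edges (T - {v})) k (contr_label (T - {v}) x)"
    proof
      fix X assume "X \<in> contr_nodes V E k (T - {v})"
      then obtain a where a: "X = c' a" "col a" unfolding nodes_eq by blast
      show "is_coloring (T - {v}) (complete_edges (T - {v})) k (contr_label (T - {v}) X)"
        using rcol[OF a(2) Tv_sub] a(1) by (simp add: label_comp)
    qed
    show "\<forall>c. is_coloring (T - {v}) (complete_edges (T - {v})) k c \<longrightarrow>
        (\<exists>!x. x \<in> contr_nodes V E k (T - {v}) \<and> contr_label (T - {v}) x = c)"
    proof (intro allI impI)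
      fix c assume c: "is_coloring (T - {v}) (complete_edges (T - {v})) k c"
      have dc: "dom c = T - {v}" using c unfolding is_coloring_def by blast
      have fd: "finite (dom c)" using dc finT by simp
      have "card (ran c) \<le> k - 2" using card_ran[OF fd] dc cardT' by simp
      then have lt: "card (ran c) < card {1..k}" using k2 by simp
      have "\<not> {1..k} \<subseteq> ran c"
      proof
        assume "{1..k} \<subseteq> ran c"
        then have "card {1..k} \<le> card (ran c)" using finite_ran[OF fd] by (rule card_mono[rotated])
        then show False using lt by simp
      qed
      then obtain p where p: "p \<in> {1..k}" "p \<notin> ran c" by blast
      have cp: "is_coloring T (complete_edges T) k (c(v \<mapsto> p))"
        using ext_col[OF c p, of v] Tins by simp
      then obtain x where x: "x \<in> contr_nodes V E k T" "contr_label T x = c(v \<mapsto> p)" using P2 by blast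
      then obtain g where g: "x = cT g" "col g" unfolding nodes_eq by blast
      have gT: "g |` T = c(v \<mapsto> p)" using x g by (simp add: label_comp)
      have gT': "g |` (T - {v}) = c" by (rule restr_upd[OF dc gT])
      show "\<exists>!X. X \<in> contr_nodes V E k (T - {v}) \<and> contr_label (T - {v}) X = c"
      proof (rule ex1I[of _ "c' g"])
        show "c' g \<in> contr_nodes V E k (T - {v}) \<and> contr_label (T - {v}) (c' g) = c"
          using g(2) gT' unfolding nodes_eq by (simp add: label_comp)
      next
        fix Y assume Y: "Y \<in> contr_nodes V E k (T - {v}) \<and> contr_label (T - {v}) Y = c"
        then obtain b where b: "Y = c' b" "col b" unfolding nodes_eq by blast
        have "b |` (T - {v}) = c" using Y b(1) by (simp add: label_comp)
        then have "R'\<^sup>*\<^sup>* g b" using U[OF g(2) b(2)] gT' by simp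
        then have "c' g = c' b" by (rule comp_eq)
        then show "Y = c' g" using b(1) by simp
      qed
    qed
    show "\<forall>x\<in>contr_nodes V E k (T - {v}). \<forall>y\<in>contr_nodes V E k (T - {v}). x \<noteq> y \<longrightarrow>
       (contr_adj V E k x y \<longleftrightarrow> differ_on_one (T - {v}) (contr_label (T - {v}) x) (contr_label (T - {v}) y))"
    proof (intro ballI impI)
      fix X Y assume XY: "X \<in> contr_nodes V E k (T - {v})" "Y \<in> contr_nodes V E k (T - {v})" "X \<noteq> Y"
      obtain a where a: "X = c' a" "col a" using XY(1) unfolding nodes_eq by blast
      obtain b where b: "Y = c' b" "col b" using XY(2) unfolding nodes_eq by blast
      have lX: "contr_label (T - {v}) X = a |` (T - {v})" using a(1) by (simp add: label_comp)
      have lY: "contr_label (T - {v}) Y = b |` (T - {v})" using b(1) by (simp add: label_comp)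
      show "contr_adj V E k X Y \<longleftrightarrow> differ_on_one (T - {v}) (contr_label (T - {v}) X) (contr_label (T - {v}) Y)"
        unfolding lX lY
      proof
        assume "contr_adj V E k X Y"
        then obtain g d where gd: "g \<in> X" "d \<in> Y" "col_adj V E k g d" unfolding contr_adj_def by blast
        have "R'\<^sup>*\<^sup>* a g" using gd(1) a(1) by (simp add: comp_mem)
        then have la: "g |` (T - {v}) = a |` (T - {v})" by (rule rtc_label)
        have "R'\<^sup>*\<^sup>* b d" using gd(2) b(1) by (simp add: comp_mem)
        then have lb: "d |` (T - {v}) = b |` (T - {v})" by (rule rtc_label)
        have Xg: "X = c' g" using gd(1) a(1) comp_eq'[of g "T - {v}" a] by simp
        have Yd: "Y = c' d" using gd(2) b(1) comp_eq'[of d "T - {v}" b] by simp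
        have "g |` (T - {v}) \<noteq> d |` (T - {v})"
        proof
          assume "g |` (T - {v}) = d |` (T - {v})"
          then have "R' g d" using gd(3) unfolding same_label_adj_def by simp
          then have "c' g = c' d" by (intro comp_eq r_into_rtranclp)
          then show False using Xg Yd XY(3) by simp
        qed
        then obtain x0 where x0: "(g |` (T - {v})) x0 \<noteq> (d |` (T - {v})) x0" by (meson ext)
        then have x0T: "x0 \<in> T - {v}" by (cases "x0 \<in> T - {v}") auto
        obtain u where u: "u \<in> V" "g u \<noteq> d u" "\<And>x. x \<noteq> u \<Longrightarrow> g x = d x"
          using col_adj_unique[OF gd(3)] by blast
        have "x0 = u" using u(3) x0 x0T by auto
        have "{w \<in> T - {v}. (a |` (T - {v})) w \<noteq> (b |` (T - {v})) w} = {x0}"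
        proof (intro equalityI subsetI)
          fix w assume "w \<in> {w \<in> T - {v}. (a |` (T - {v})) w \<noteq> (b |` (T - {v})) w}"
          then have w: "w \<in> T - {v}" "a w \<noteq> b w" by auto
          then have "g w \<noteq> d w" using restr_val[OF la w(1)] restr_val[OF lb w(1)] by simp
          then show "w \<in> {x0}" using u(3) \<open>x0 = u\<close> by auto
        next
          fix w assume "w \<in> {x0}"
          then show "w \<in> {w \<in> T - {v}. (a |` (T - {v})) w \<noteq> (b |` (T - {v})) w}"
            using x0 x0T la lb by auto
        qed
        then show "differ_on_one (T - {v}) (a |` (T - {v})) (b |` (T - {v}))"
          unfolding differ_on_one_def by simp
      next
        assume dif: "differ_on_one (T - {v}) (a |` (T - {v})) (b |` (T - {v}))"
        obtain u where u: "{w \<in> T - {v}. (a |` (T - {v})) w \<noteq> (b |` (T - {v})) w} = {u}"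
          using dif unfolding differ_on_one_def by (meson card_1_singletonE)
        have "u \<in> {w \<in> T - {v}. (a |` (T - {v})) w \<noteq> (b |` (T - {v})) w}" unfolding u by simp
        then have uT: "u \<in> T - {v}" "a u \<noteq> b u" by auto
        have same: "a w = b w" if w: "w \<in> T - {v}" "w \<noteq> u" for w
        proof (rule ccontr)
          assume "a w \<noteq> b w"
          then have "w \<in> {w \<in> T - {v}. (a |` (T - {v})) w \<noteq> (b |` (T - {v})) w}" using w by simp
          then have "w \<in> {u}" unfolding u .
          then show False using w by simp
        qed
        let ?ca = "a |` (T - {v})" and ?cb = "b |` (T - {v})"
        have ca: "is_coloring (T - {v}) (complete_edges (T - {v})) k ?ca" by (rule rcol[OF a(2) Tv_sub])
        have cb: "is_coloring (T - {v}) (complete_edges (T - {v})) k ?cb" by (rule rcol[OF b(2) Tv_sub])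
        have dca: "dom ?ca = T - {v}" using ca unfolding is_coloring_def by blast
        have dcb: "dom ?cb = T - {v}" using cb unfolding is_coloring_def by blast
        have fd: "finite (dom ?ca)" using dca finT by simp
        have sub: "ran ?cb \<subseteq> insert (the (b u)) (ran ?ca)"
        proof
          fix y assume "y \<in> ran ?cb"
          then obtain w where w: "w \<in> T - {v}" "b w = Some y" by (auto dest: ran_restrictD)
          show "y \<in> insert (the (b u)) (ran ?ca)"
          proof (cases "w = u")
            case True then show ?thesis using w by simp
          next
            case False
            then have "?ca w = Some y" using same[OF w(1) False] w by simp
            then show ?thesis by (auto intro: ranI)
          qed
        qed
        have c1: "card (ran ?ca \<union> ran ?cb) \<le> card (insert (the (b u)) (ran ?ca))"
          using sub finite_ran[OF fd] by (intro card_mono) auto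
        have c2: "card (insert (the (b u)) (ran ?ca)) \<le> Suc (card (ran ?ca))"
          using finite_ran[OF fd] by (simp add: card_insert_if)
        have c3: "card (ran ?ca) \<le> k - 2" using card_ran[OF fd] dca cardT' by simp
        have lt: "card (ran ?ca \<union> ran ?cb) < card {1..k}" using c1 c2 c3 k2 by simp
        have fu: "finite (ran ?ca \<union> ran ?cb)" using finite_ran[OF fd] sub finite_subset by auto
        have "\<not> {1..k} \<subseteq> ran ?ca \<union> ran ?cb"
        proof
          assume h: "{1..k} \<subseteq> ran ?ca \<union> ran ?cb"
          have "card {1..k} \<le> card (ran ?ca \<union> ran ?cb)" by (rule card_mono[OF fu h])
          then show False using lt by simp
        qed
        then obtain p where p: "p \<in> {1..k}" "p \<notin> ran ?ca" "p \<notin> ran ?cb" by blast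
        have cpa: "is_coloring T (complete_edges T) k (?ca(v \<mapsto> p))"
          using ext_col[OF ca p(1,2), of v] Tins by simp
        have cpb: "is_coloring T (complete_edges T) k (?cb(v \<mapsto> p))"
          using ext_col[OF cb p(1,3), of v] Tins by simp
        obtain x1 where x1: "x1 \<in> contr_nodes V E k T" "contr_label T x1 = ?ca(v \<mapsto> p)" using P2 cpa by blast
        obtain g1 where g1: "x1 = cT g1" "col g1" using x1(1) unfolding nodes_eq by blast
        obtain x2 where x2: "x2 \<in> contr_nodes V E k T" "contr_label T x2 = ?cb(v \<mapsto> p)" using P2 cpb by blast
        obtain g2 where g2: "x2 = cT g2" "col g2" using x2(1) unfolding nodes_eq by blast
        have uv: "u \<noteq> v" using uT by simp
        have diffl: "(?ca(v \<mapsto> p)) u \<noteq> (?cb(v \<mapsto> p)) u" using uT uv by simp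
        have ne12: "x1 \<noteq> x2"
        proof
          assume "x1 = x2"
          have "?ca(v \<mapsto> p) = contr_label T x1" using x1(2) by (rule sym)
          also have "\<dots> = contr_label T x2" using \<open>x1 = x2\<close> by (rule arg_cong)
          also have "\<dots> = ?cb(v \<mapsto> p)" using x2(2) .
          finally have eqf: "?ca(v \<mapsto> p) = ?cb(v \<mapsto> p)" .
          have "(?ca(v \<mapsto> p)) u = (?cb(v \<mapsto> p)) u" using eqf by (rule fun_cong)
          then show False using diffl by contradiction
        qed
        have "{w \<in> T. (?ca(v \<mapsto> p)) w \<noteq> (?cb(v \<mapsto> p)) w} = {u}"
        proof (intro equalityI subsetI)
          fix w assume "w \<in> {w \<in> T. (?ca(v \<mapsto> p)) w \<noteq> (?cb(v \<mapsto> p)) w}"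
          then have w: "w \<in> T" "(?ca(v \<mapsto> p)) w \<noteq> (?cb(v \<mapsto> p)) w" by auto
          then have "w \<noteq> v" by auto
          then have "w \<in> T - {v}" "a w \<noteq> b w" using w by auto
          then show "w \<in> {u}" using same by blast
        next
          fix w assume "w \<in> {u}" then show "w \<in> {w \<in> T. (?ca(v \<mapsto> p)) w \<noteq> (?cb(v \<mapsto> p)) w}"
            using diffl uT by auto
        qed
        then have "differ_on_one T (contr_label T x1) (contr_label T x2)"
          unfolding differ_on_one_def x1(2) x2(2) by simp
        then have "contr_adj V E k x1 x2" using P3 x1(1) x2(1) ne12 by blast
        then obtain h1 h2 where h: "h1 \<in> x1" "h2 \<in> x2" "col_adj V E k h1 h2" unfolding contr_adj_def by blast
        have ch: "col h1" "col h2" using h(3) unfolding col_adj_def by auto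
        have "RT\<^sup>*\<^sup>* g1 h1" using h(1) g1(1) by (simp add: comp_mem)
        then have "h1 |` T = g1 |` T" by (rule rtc_label)
        then have "h1 |` T = ?ca(v \<mapsto> p)" using x1(2) g1(1) by (simp add: label_comp)
        then have "h1 |` (T - {v}) = ?ca" by (rule restr_upd[OF dca])
        then have "R'\<^sup>*\<^sup>* a h1" using U[OF a(2) ch(1)] by simp
        then have "h1 \<in> X" using a(1) by (simp add: comp_mem)
        have "RT\<^sup>*\<^sup>* g2 h2" using h(2) g2(1) by (simp add: comp_mem)
        then have "h2 |` T = g2 |` T" by (rule rtc_label)
        then have "h2 |` T = ?cb(v \<mapsto> p)" using x2(2) g2(1) by (simp add: label_comp)
        then have "h2 |` (T - {v}) = ?cb" by (rule restr_upd[OF dcb])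
        then have "R'\<^sup>*\<^sup>* b h2" using U[OF b(2) ch(2)] by simp
        then have "h2 \<in> Y" using b(1) by (simp add: comp_mem)
        show "contr_adj V E k X Y" unfolding contr_adj_def
          using XY(3) \<open>h1 \<in> X\<close> \<open>h2 \<in> Y\<close> h(3) by blast
      qed
    qed
  qed
qed

end

theorem lemma7:
  fixes V :: "'a set" and E :: "'a \<Rightarrow> 'a \<Rightarrow> bool" and k :: nat and T :: "'a set" and v :: 'a
  assumes "simple_graph V E" and "chordal V E" and "colorable V E k"
    and "is_clique V E T" and "k - 1 \<le> card T" and "v \<in> T"
  shows "(color_complete (k - 1) k (contr_nodes V E k T) (contr_adj V E k) (contr_label T)
            \<longrightarrow> color_complete (k - 2) k (contr_nodes V E k (T - {v})) (contr_adj V E k)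
                  (contr_label (T - {v})))
       \<and> (is_forest (contr_nodes V E k T) (contr_adj V E k)
            \<and> injective_nbhd (contr_nodes V E k T) (contr_adj V E k) (contr_label T)
            \<longrightarrow> is_forest (contr_nodes V E k (T - {v})) (contr_adj V E k)
              \<and> injective_nbhd (contr_nodes V E k (T - {v})) (contr_adj V E k) (contr_label (T - {v})))"
proof -
  note h = assms(1) assms(4) assms(5) assms(6)
  show ?thesis
  proof (intro conjI impI)
    assume "color_complete (k - 1) k (contr_nodes V E k T) (contr_adj V E k) (contr_label T)"
    then show "color_complete (k - 2) k (contr_nodes V E k (T - {v})) (contr_adj V E k) (contr_label (T - {v}))"
      by (rule cc_part[OF h _ assms(3)])
  next
    assume a: "is_forest (contr_nodes V E k T) (contr_adj V E k) \<and>
            injective_nbhd (contr_nodes V E k T) (contr_adj V E k) (contr_label T)"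
    show "is_forest (contr_nodes V E k (T - {v})) (contr_adj V E k)"
      using forest_part[OF h] a by blast
    show "injective_nbhd (contr_nodes V E k (T - {v})) (contr_adj V E k) (contr_label (T - {v}))"
      using inj_part[OF h] a by blast
  qed
qed

end
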